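(* For every graph $U$ containing no $K_{\aleph_0}$ subgraph, there is a graph $\widehat{U}\in\mathcal{D}(U)$ that contains every graph in $\mathcal{D}(U)$.
   Context: All graphs are simple and countable; $G$ contains $H$ if $H$ is isomorphic to a subgraph of $G$. A tree-decomposition of $G$ is a family $(B_x:x\in V(T))$ of subsets of $V(G)$ indexed by a tree $T$ with every edge of $G$ inside some bag and, for each vertex $v$, $\{x:v\in B_x\}$ inducing a nonempty subtree of $T$. The torso of a node $x$ is the graph obtained from $G[B_x]$ by adding an edge $vw$ whenever $v,w\in B_x\cap B_y$ for some edge $xy\in E(T)$. $\mathcal{D}(U)$ is the class of graphs having a tree-decomposition in which every torso is isomorphic to a subgraph of $U$. *)

theory Defs
  imports Main "HOL-Library.Countable_Set"
begin

definition simple_graph :: "'a set \<Rightarrow> ('a \<Rightarrow> 'a \<Rightarrow> bool) \<Rightarrow> bool" where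
  "simple_graph V E \<longleftrightarrow> (\<forall>x y. E x y \<longrightarrow> x \<in> V \<and> y \<in> V \<and> x \<noteq> y \<and> E y x)"

definition cgraph :: "'a set \<Rightarrow> ('a \<Rightarrow> 'a \<Rightarrow> bool) \<Rightarrow> bool" where
  "cgraph V E \<longleftrightarrow> simple_graph V E \<and> countable V"

definition contains ::
  "'a set \<Rightarrow> ('a \<Rightarrow> 'a \<Rightarrow> bool) \<Rightarrow> 'b set \<Rightarrow> ('b \<Rightarrow> 'b \<Rightarrow> bool) \<Rightarrow> bool" where
  "contains V E V' E' \<longleftrightarrow> (\<exists>f. inj_on f V' \<and> f ` V' \<subseteq> V \<and>
      (\<forall>x\<in>V'. \<forall>y\<in>V'. E' x y \<longrightarrow> E (f x) (f y)))"

definition K_aleph0_V :: "nat set" where "K_aleph0_V = UNIV"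
definition K_aleph0_E :: "nat \<Rightarrow> nat \<Rightarrow> bool" where "K_aleph0_E x y \<longleftrightarrow> x \<noteq> y"

definition connected_graph :: "'a set \<Rightarrow> ('a \<Rightarrow> 'a \<Rightarrow> bool) \<Rightarrow> bool" where
  "connected_graph V E \<longleftrightarrow> (\<forall>x\<in>V. \<forall>y\<in>V.
      (\<lambda>a b. E a b \<and> a \<in> V \<and> b \<in> V)\<^sup>*\<^sup>* x y)"

definition has_cycle :: "'a set \<Rightarrow> ('a \<Rightarrow> 'a \<Rightarrow> bool) \<Rightarrow> bool" where
  "has_cycle V E \<longleftrightarrow> (\<exists>xs. length xs \<ge> 3 \<and> distinct xs \<and> set xs \<subseteq> V \<and>
      (\<forall>i. Suc i < length xs \<longrightarrow> E (xs ! i) (xs ! Suc i)) \<and> E (last xs) (hd xs))"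

definition is_tree :: "'a set \<Rightarrow> ('a \<Rightarrow> 'a \<Rightarrow> bool) \<Rightarrow> bool" where
  "is_tree V E \<longleftrightarrow> simple_graph V E \<and> V \<noteq> {} \<and> connected_graph V E \<and> \<not> has_cycle V E"

definition tree_decomposition ::
  "'a set \<Rightarrow> ('a \<Rightarrow> 'a \<Rightarrow> bool) \<Rightarrow> 't set \<Rightarrow> ('t \<Rightarrow> 't \<Rightarrow> bool) \<Rightarrow> ('t \<Rightarrow> 'a set) \<Rightarrow> bool" where
  "tree_decomposition V E VT ET B \<longleftrightarrow>
     is_tree VT ET \<and>
     (\<forall>x\<in>VT. B x \<subseteq> V) \<and>
     (\<forall>v w. E v w \<longrightarrow> (\<exists>x\<in>VT. v \<in> B x \<and> w \<in> B x)) \<and>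
     (\<forall>v\<in>V. {x \<in> VT. v \<in> B x} \<noteq> {} \<and> connected_graph {x \<in> VT. v \<in> B x} ET)"

definition torso_E ::
  "('a \<Rightarrow> 'a \<Rightarrow> bool) \<Rightarrow> ('t \<Rightarrow> 't \<Rightarrow> bool) \<Rightarrow> ('t \<Rightarrow> 'a set) \<Rightarrow> 't \<Rightarrow> 'a \<Rightarrow> 'a \<Rightarrow> bool" where
  "torso_E E ET B x v w \<longleftrightarrow> v \<in> B x \<and> w \<in> B x \<and> v \<noteq> w \<and>
      (E v w \<or> (\<exists>y. ET x y \<and> v \<in> B y \<and> w \<in> B y))"

text \<open>G is in D(U): G has a tree-decomposition (over a countable tree) all of whose
torsos are isomorphic to subgraphs of U.\<close>
definition in_D ::
  "'u set \<Rightarrow> ('u \<Rightarrow> 'u \<Rightarrow> bool) \<Rightarrow> nat set \<Rightarrow> (nat \<Rightarrow> nat \<Rightarrow> bool) \<Rightarrow> bool" where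
  "in_D VU EU V E \<longleftrightarrow> (\<exists>(VT::nat set) ET B. tree_decomposition V E VT ET B \<and>
      (\<forall>x\<in>VT. contains VU EU (B x) (torso_E E ET B x)))"

end

theory Submission
  imports Defs "HOL-Library.Sublist"
begin


type_synonym lab = "(nat \<times> nat) list \<times> nat"
type_synonym node = "lab list"
type_synonym vtx = "node \<times> nat"

fun sig :: "node \<Rightarrow> nat \<Rightarrow> vtx" where
  "sig [] u = ([], u)"
| "sig (l # s) u = (case map_of (fst l) u of Some a \<Rightarrow> sig s a | None \<Rightarrow> (l # s, u))"

definition clq :: "nat set \<Rightarrow> (nat \<Rightarrow> nat \<Rightarrow> bool) \<Rightarrow> nat set \<Rightarrow> bool" where
  "clq VU EU C \<longleftrightarrow> C \<subseteq> VU \<and> (\<forall>a\<in>C. \<forall>b\<in>C. a \<noteq> b \<longrightarrow> EU a b)"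

definition valid :: "nat set \<Rightarrow> (nat \<Rightarrow> nat \<Rightarrow> bool) \<Rightarrow> lab \<Rightarrow> bool" where
  "valid VU EU l \<longleftrightarrow> distinct (map fst (fst l)) \<and> distinct (map snd (fst l)) \<and>
     clq VU EU (fst ` set (fst l)) \<and> clq VU EU (snd ` set (fst l))"

definition VTH :: "nat set \<Rightarrow> (nat \<Rightarrow> nat \<Rightarrow> bool) \<Rightarrow> node set" where
  "VTH VU EU = {s. \<forall>l\<in>set s. valid VU EU l}"

definition ETH :: "nat set \<Rightarrow> (nat \<Rightarrow> nat \<Rightarrow> bool) \<Rightarrow> node \<Rightarrow> node \<Rightarrow> bool" where
  "ETH VU EU a b \<longleftrightarrow> a \<in> VTH VU EU \<and> b \<in> VTH VU EU \<and> ((\<exists>l. a = l # b) \<or> (\<exists>l. b = l # a))"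

definition BH :: "nat set \<Rightarrow> node \<Rightarrow> vtx set" where
  "BH VU s = sig s ` VU"

definition VHH :: "nat set \<Rightarrow> (nat \<Rightarrow> nat \<Rightarrow> bool) \<Rightarrow> vtx set" where
  "VHH VU EU = (\<Union>s\<in>VTH VU EU. BH VU s)"

definition EHH :: "nat set \<Rightarrow> (nat \<Rightarrow> nat \<Rightarrow> bool) \<Rightarrow> vtx \<Rightarrow> vtx \<Rightarrow> bool" where
  "EHH VU EU a b \<longleftrightarrow> (\<exists>s\<in>VTH VU EU. \<exists>u w. EU u w \<and> a = sig s u \<and> b = sig s w)"

context
  fixes VU :: "nat set" and EU :: "nat \<Rightarrow> nat \<Rightarrow> bool"
  assumes sg: "simple_graph VU EU"
begin

lemma VTH_Cons[simp]: "(l # s \<in> VTH VU EU) \<longleftrightarrow> valid VU EU l \<and> s \<in> VTH VU EU"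
  by (auto simp: VTH_def)

lemma VTH_Nil[simp]: "[] \<in> VTH VU EU"
  by (auto simp: VTH_def)

lemma VTH_suffix: "t \<in> VTH VU EU \<Longrightarrow> suffix q t \<Longrightarrow> q \<in> VTH VU EU"
  by (auto simp: VTH_def suffix_def)

lemma map_of_valid:
  assumes "valid VU EU l" "map_of (fst l) u = Some a"
  shows "a \<in> VU" "u \<in> VU"
  using assms map_of_SomeD[OF assms(2)] by (force simp: valid_def clq_def)+

lemma sig_home: "s \<in> VTH VU EU \<Longrightarrow> suffix (fst (sig s u)) s"
proof (induction s arbitrary: u)
  case Nil then show ?case by simp
next
  case (Cons l s)
  show ?case
  proof (cases "map_of (fst l) u")
    case None then show ?thesis by simp
  next
    case (Some a)
    then have "suffix (fst (sig s a)) s" using Cons by simp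
    then show ?thesis using Some by (simp add: suffix_ConsI)
  qed
qed

lemma sig_home_len: "s \<in> VTH VU EU \<Longrightarrow> length (fst (sig s u)) \<le> length s"
  using sig_home suffix_length_le by blast

lemma sig_inj: "s \<in> VTH VU EU \<Longrightarrow> inj_on (sig s) VU"
proof (induction s)
  case Nil then show ?case by (simp add: inj_on_def)
next
  case (Cons l s)
  then have v: "valid VU EU l" and sv: "s \<in> VTH VU EU" by auto
  show ?case
  proof (rule inj_onI)
    fix u w assume u: "u \<in> VU" and w: "w \<in> VU" and eq: "sig (l # s) u = sig (l # s) w"
    show "u = w"
    proof (cases "map_of (fst l) u")
      case None
      note Nu = None
      show ?thesis
      proof (cases "map_of (fst l) w")
        case None then show ?thesis using eq Nu by simp
      next
        case (Some b)
        then have "sig (l#s) w = sig s b" by simp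
        then have "length (fst (sig (l#s) w)) \<le> length s" using sig_home_len[OF sv] by simp
        then show ?thesis using eq Nu Some by (metis Suc_n_not_le_n fst_conv length_Cons option.simps(4) sig.simps(2))
      qed
    next
      case (Some a)
      note Sa = Some
      show ?thesis
      proof (cases "map_of (fst l) w")
        case None
        have "sig (l#s) u = sig s a" using Sa by simp
        then have "length (fst (sig (l#s) u)) \<le> length s" using sig_home_len[OF sv] by simp
        then show ?thesis using eq None by simp
      next
        case (Some b)
        have "sig s a = sig s b" using eq Sa Some by simp
        moreover have "a \<in> VU" "b \<in> VU" using map_of_valid[OF v] Sa Some by auto
        ultimately have "a = b" using Cons.IH[OF sv] by (auto dest: inj_onD)
        then have "(u, a) \<in> set (fst l)" "(w, a) \<in> set (fst l)"
          using Sa Some by (auto dest: map_of_SomeD)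
        then show ?thesis using v unfolding valid_def
          by (metis distinct_map inj_on_eq_iff snd_conv fst_conv)
      qed
    qed
  qed
qed

lemma walk_up:
  assumes "t \<in> VTH VU EU" "u \<in> VU" "suffix q t" "suffix (fst (sig t u)) q"
  shows "sig t u \<in> BH VU q"
  using assms
proof (induction t arbitrary: u)
  case Nil then show ?case by (auto simp: BH_def)
next
  case (Cons l s)
  show ?case
  proof (cases "q = l # s")
    case True then show ?thesis using Cons.prems by (auto simp: BH_def)
  next
    case False
    then have qs: "suffix q s" using Cons.prems(3) by (simp add: suffix_Cons)
    show ?thesis
    proof (cases "map_of (fst l) u")
      case None
      then have "fst (sig (l#s) u) = l # s" by simp
      then have "length (l#s) \<le> length q" using Cons.prems(4) suffix_length_le by metis
      moreover have "length q \<le> length s" using qs suffix_length_le by blast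
      ultimately show ?thesis by simp
    next
      case (Some a)
      have "a \<in> VU" using map_of_valid(1)[of l u a] Some Cons.prems(1) by auto
      then show ?thesis using Cons Some qs by simp
    qed
  qed
qed

lemma in_BH: "v \<in> BH VU q \<longleftrightarrow> (\<exists>u\<in>VU. v = sig q u)"
  by (auto simp: BH_def)

lemma child_step:
  assumes "l # s \<in> VTH VU EU" "u \<in> VU" "sig (l # s) u \<in> BH VU s"
  shows "\<exists>a. map_of (fst l) u = Some a \<and> sig (l#s) u = sig s a"
proof (cases "map_of (fst l) u")
  case None
  obtain w where "w \<in> VU" "sig (l#s) u = sig s w" using assms(3) by (auto simp: BH_def)
  moreover have "s \<in> VTH VU EU" using assms by simp
  ultimately have "length (fst (sig (l#s) u)) \<le> length s" using sig_home_len by metis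
  then show ?thesis using None by simp
qed simp

lemma H3:
  assumes "l # s \<in> VTH VU EU" "u \<in> VU" "w \<in> VU" "u \<noteq> w"
    "sig (l # s) u \<in> BH VU s" "sig (l # s) w \<in> BH VU s"
  shows "EU u w"
proof -
  have v: "valid VU EU l" using assms by simp
  obtain a where "map_of (fst l) u = Some a" using child_step assms by blast
  then have "(u, a) \<in> set (fst l)" by (rule map_of_SomeD)
  moreover obtain b where "map_of (fst l) w = Some b" using child_step assms by blast
  then have "(w, b) \<in> set (fst l)" by (rule map_of_SomeD)
  ultimately show ?thesis using v assms(4) unfolding valid_def clq_def by force
qed

lemma H3':
  assumes "l # s \<in> VTH VU EU" "u \<in> VU" "w \<in> VU" "u \<noteq> w"
    "sig (l # s) u = sig s u'" "sig (l # s) w = sig s w'" "u' \<in> VU" "w' \<in> VU"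
  shows "EU u' w'"
proof -
  have v: "valid VU EU l" and sv: "s \<in> VTH VU EU" using assms by auto
  have "sig (l # s) u \<in> BH VU s" "sig (l # s) w \<in> BH VU s" using assms by (auto simp: BH_def)
  then obtain a b where a: "map_of (fst l) u = Some a" "sig (l#s) u = sig s a"
     and b: "map_of (fst l) w = Some b" "sig (l#s) w = sig s b"
    using child_step assms by meson
  have "a \<in> VU" "b \<in> VU" using map_of_valid[OF v] a b by auto
  then have "a = u'" "b = w'" using sig_inj[OF sv] a b assms by (auto dest: inj_onD)
  moreover have "(u, a) \<in> set (fst l)" "(w, b) \<in> set (fst l)" using a b by (auto dest: map_of_SomeD)
  moreover have "a \<noteq> b" using assms(4) calculation(3,4) v unfolding valid_def
    by (metis distinct_map inj_on_eq_iff fst_conv snd_conv)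
  ultimately show ?thesis using v unfolding valid_def clq_def by force
qed

lemma torso_H:
  assumes s: "s \<in> VTH VU EU"
  shows "contains VU EU (BH VU s) (torso_E (EHH VU EU) (ETH VU EU) (BH VU) s)"
proof -
  let ?f = "inv_into VU (sig s)"
  have inj: "inj_on (sig s) VU" using sig_inj s by blast
  have key: "EU u w" if u: "u \<in> VU" and w: "w \<in> VU" and tor: "torso_E (EHH VU EU) (ETH VU EU) (BH VU) s (sig s u) (sig s w)" for u w
  proof -
    have uw: "u \<noteq> w" using tor unfolding torso_E_def by auto
    from tor consider (e) "EHH VU EU (sig s u) (sig s w)"
      | (adh) t where "ETH VU EU s t" "sig s u \<in> BH VU t" "sig s w \<in> BH VU t"
      unfolding torso_E_def by blast
    then show ?thesis
    proof cases
      case adh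
      then have t: "t \<in> VTH VU EU" by (simp add: ETH_def)
      from adh(1) consider l where "t = l # s" | l where "s = l # t" unfolding ETH_def by blast
      then show ?thesis
      proof cases
        case 1
        obtain u' w' where u': "u' \<in> VU" "sig s u = sig t u'" and w': "w' \<in> VU" "sig s w = sig t w'"
          using adh by (auto simp: BH_def)
        have "u' \<noteq> w'" using uw u' w' inj u w by (metis inj_onD)
        then show ?thesis using H3'[of l s u' w' u w] 1 t u' w' u w by simp
      next
        case 2
        then show ?thesis using H3[of l t u w] s adh u w uw by simp
      qed
    next
      case e
      then obtain t u' w' where t: "t \<in> VTH VU EU" and e': "EU u' w'" "sig s u = sig t u'" "sig s w = sig t w'"
        unfolding EHH_def by blast
      have u'w': "u' \<in> VU" "w' \<in> VU" using e'(1) sg unfolding simple_graph_def by auto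
      define ha where "ha = fst (sig s u)"
      define hb where "hb = fst (sig s w)"
      have has: "suffix ha s" "suffix hb s" using sig_home s ha_def hb_def by auto
      have hat: "suffix ha t" "suffix hb t" using sig_home t ha_def hb_def e' by auto
      have "suffix ha hb \<or> suffix hb ha" by (rule suffix_same_cases[OF has])
      then obtain q where q: "suffix ha q" "suffix hb q" "q = ha \<or> q = hb"
        using suffix_order.refl by blast
      have qs: "suffix q s" using q(3) has by blast
      have qt: "suffix q t" using q(3) hat by blast
      show ?thesis
      proof (cases "s = q")
        case False
        then obtain l s1 where s1: "s = l # s1" using qs by (cases s) auto
        then have s1q: "suffix q s1" using qs False by (simp add: suffix_Cons)
        have s1s: "suffix s1 s" using s1 by (simp add: suffix_ConsI)
        have "suffix ha s1" "suffix hb s1" using q(1,2) s1q suffix_order.trans by blast+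
        then have "sig s u \<in> BH VU s1" "sig s w \<in> BH VU s1"
          using walk_up[OF s u s1s] walk_up[OF s w s1s] ha_def hb_def by auto
        then show ?thesis using H3[of l s1 u w] s s1 u w uw by simp
      next
        case True
        show ?thesis
        proof (cases "t = q")
          case True
          then have "sig q u = sig q u'" "sig q w = sig q w'" using e' \<open>s = q\<close> by auto
          then have "u = u'" "w = w'" using \<open>s = q\<close> inj u w u'w' by (metis inj_onD)+
          then show ?thesis using e' by simp
        next
          case False
          then obtain r where r: "t = r @ q" "r \<noteq> []" using qt unfolding suffix_def by auto
          define q' where "q' = last r # q"
          have rr: "r = butlast r @ [last r]" using r(2) by simp
          have "t = butlast r @ q'" unfolding q'_def using r(1) rr
            by (metis append.assoc append_Cons append_Nil)
          then have q't: "suffix q' t" unfolding suffix_def by blast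
          then have q'V: "q' \<in> VTH VU EU" using VTH_suffix t by blast
          have "suffix ha q'" unfolding q'_def using q(1) by (rule suffix_ConsI)
          then have "suffix (fst (sig t u')) q'" using e'(2) ha_def by simp
          then have "sig t u' \<in> BH VU q'" using walk_up[OF t u'w'(1) q't] by simp
          then obtain u2 where u2: "u2 \<in> VU" "sig t u' = sig q' u2" by (auto simp: BH_def)
          have "suffix hb q'" unfolding q'_def using q(2) by (rule suffix_ConsI)
          then have "suffix (fst (sig t w')) q'" using e'(3) hb_def by simp
          then have "sig t w' \<in> BH VU q'" using walk_up[OF t u'w'(2) q't] by simp
          then obtain w2 where w2: "w2 \<in> VU" "sig t w' = sig q' w2" by (auto simp: BH_def)
          have "u2 \<noteq> w2" using u2 w2 e' uw inj u w by (metis inj_onD)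
          moreover have "sig q' u2 = sig q u" "sig q' w2 = sig q w" using u2 w2 e' \<open>s = q\<close> by auto
          ultimately show ?thesis using H3'[of "last r" q u2 w2 u w] q'V q'_def u2 w2 u w
            by simp
        qed
      qed
    qed
  qed
  show ?thesis unfolding contains_def
  proof (intro exI[of _ ?f] conjI ballI impI)
    show "inj_on ?f (BH VU s)" unfolding BH_def by (rule inj_on_inv_into) simp
    show "?f ` BH VU s \<subseteq> VU" unfolding BH_def by (auto intro: inv_into_into)
    fix x y assume "x \<in> BH VU s" "y \<in> BH VU s" "torso_E (EHH VU EU) (ETH VU EU) (BH VU) s x y"
    then obtain u w where "u \<in> VU" "w \<in> VU" "x = sig s u" "y = sig s w"
      "torso_E (EHH VU EU) (ETH VU EU) (BH VU) s (sig s u) (sig s w)" by (auto simp: BH_def)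
    then show "EU (?f x) (?f y)" using key inj by simp
  qed
qed

lemma ETH_sym: "ETH VU EU a b \<longleftrightarrow> ETH VU EU b a"
  unfolding ETH_def by blast

lemma sg_H_tree: "simple_graph (VTH VU EU) (ETH VU EU)"
  unfolding simple_graph_def ETH_def by auto

lemma H_home_path:
  assumes "t \<in> VTH VU EU" "u \<in> VU" "v = sig t u"
  shows "(\<lambda>a b. ETH VU EU a b \<and> a \<in> {x \<in> VTH VU EU. v \<in> BH VU x} \<and> b \<in> {x \<in> VTH VU EU. v \<in> BH VU x})\<^sup>*\<^sup>* t (fst v)"
  using assms
proof (induction t arbitrary: u)
  case Nil then show ?case by simp
next
  case (Cons l s)
  show ?case
  proof (cases "map_of (fst l) u")
    case None then show ?thesis using Cons.prems by simp
  next
    case (Some a)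
    have a: "a \<in> VU" using map_of_valid(1)[of l u a] Some Cons.prems(1) by auto
    have sV: "s \<in> VTH VU EU" using Cons.prems by simp
    have v: "v = sig s a" using Cons.prems Some by simp
    have IH: "(\<lambda>a b. ETH VU EU a b \<and> a \<in> {x \<in> VTH VU EU. v \<in> BH VU x} \<and> b \<in> {x \<in> VTH VU EU. v \<in> BH VU x})\<^sup>*\<^sup>* s (fst v)"
      using Cons.IH[OF sV a v] .
    have "ETH VU EU (l # s) s" using Cons.prems(1) sV unfolding ETH_def by blast
    moreover have "v \<in> BH VU (l # s)" using Cons.prems(2,3) by (metis BH_def image_eqI)
    moreover have "v \<in> BH VU s" using a v by (metis BH_def image_eqI)
    ultimately show ?thesis using Cons.prems(1) sV
      by (intro converse_rtranclp_into_rtranclp[OF _ IH]) auto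
  qed
qed

lemma rtranclp_sym: assumes "\<And>a b. R a b \<Longrightarrow> R b a" "R\<^sup>*\<^sup>* a b" shows "R\<^sup>*\<^sup>* b a"
  using assms(2) by (induction rule: rtranclp_induct) (auto intro: converse_rtranclp_into_rtranclp assms(1))

lemma connected_via:
  assumes sym: "\<And>a b. E a b \<Longrightarrow> E b a"
    and h: "\<And>x. x \<in> V \<Longrightarrow> (\<lambda>a b. E a b \<and> a \<in> V \<and> b \<in> V)\<^sup>*\<^sup>* x c"
  shows "connected_graph V E"
  unfolding connected_graph_def
proof (intro ballI)
  fix x y assume "x \<in> V" "y \<in> V"
  have "(\<lambda>a b. E a b \<and> a \<in> V \<and> b \<in> V)\<^sup>*\<^sup>* c y"
    by (rule rtranclp_sym[OF _ h[OF \<open>y \<in> V\<close>]]) (auto intro: sym)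
  with h[OF \<open>x \<in> V\<close>] show "(\<lambda>a b. E a b \<and> a \<in> V \<and> b \<in> V)\<^sup>*\<^sup>* x y" by simp
qed

lemma H_conn: "connected_graph (VTH VU EU) (ETH VU EU)"
proof (rule connected_via[where c = "[]"])
  show "ETH VU EU b a" if "ETH VU EU a b" for a b using that ETH_sym by blast
  fix x assume "x \<in> VTH VU EU"
  then show "(\<lambda>a b. ETH VU EU a b \<and> a \<in> VTH VU EU \<and> b \<in> VTH VU EU)\<^sup>*\<^sup>* x []"
  proof (induction x)
    case Nil then show ?case by simp
  next
    case (Cons l s)
    then have "s \<in> VTH VU EU" by simp
    moreover have "ETH VU EU (l # s) s" using Cons.prems calculation unfolding ETH_def by blast
    ultimately show ?case using Cons by (auto intro: converse_rtranclp_into_rtranclp)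
  qed
qed

lemma H_bag_conn:
  assumes "v \<in> VHH VU EU"
  shows "connected_graph {x \<in> VTH VU EU. v \<in> BH VU x} (ETH VU EU)"
proof (rule connected_via[where c = "fst v"])
  show "ETH VU EU b a" if "ETH VU EU a b" for a b using that ETH_sym by blast
  fix x assume "x \<in> {x \<in> VTH VU EU. v \<in> BH VU x}"
  then obtain u where "x \<in> VTH VU EU" "u \<in> VU" "v = sig x u" by (auto simp: BH_def)
  then show "(\<lambda>a b. ETH VU EU a b \<and> a \<in> {x \<in> VTH VU EU. v \<in> BH VU x} \<and> b \<in> {x \<in> VTH VU EU. v \<in> BH VU x})\<^sup>*\<^sup>* x (fst v)"
    by (rule H_home_path)
qed

lemma H_acyclic: "\<not> has_cycle (VTH VU EU) (ETH VU EU)"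
proof
  assume "has_cycle (VTH VU EU) (ETH VU EU)"
  then obtain xs where len: "length xs \<ge> 3" and dist: "distinct xs" and sub: "set xs \<subseteq> VTH VU EU"
    and cons: "\<forall>i. Suc i < length xs \<longrightarrow> ETH VU EU (xs ! i) (xs ! Suc i)"
    and lh: "ETH VU EU (last xs) (hd xs)" unfolding has_cycle_def by blast
  define n where "n = length xs"
  define M where "M = Max (length ` set xs)"
  have ne: "xs \<noteq> []" using len by auto
  have "M \<in> length ` set xs" unfolding M_def using ne by (intro Max_in) auto
  then obtain i where i: "i < n" "length (xs ! i) = M" unfolding n_def by (auto simp: in_set_conv_nth)
  have le: "length (xs ! j) \<le> M" if "j < n" for j
    unfolding M_def using that n_def by (intro Max_ge) auto
  have tl: "xs ! j = tl (xs ! i)" if "j < n" "ETH VU EU (xs ! i) (xs ! j)" for j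
  proof -
    from that(2) consider l where "xs ! i = l # xs ! j" | l where "xs ! j = l # xs ! i"
      unfolding ETH_def by blast
    then show ?thesis
    proof cases
      case 1 then show ?thesis by simp
    next
      case 2 then have "length (xs ! j) = Suc M" using i by simp
      then show ?thesis using le[OF that(1)] by simp
    qed
  qed
  have lastn: "last xs = xs ! (n - 1)" and hd0: "hd xs = xs ! 0" using ne n_def by (auto simp: last_conv_nth hd_conv_nth)
  have "\<exists>j j'. j < n \<and> j' < n \<and> j \<noteq> j' \<and> ETH VU EU (xs ! i) (xs ! j) \<and> ETH VU EU (xs ! i) (xs ! j')"
  proof (cases "i = 0")
    case True
    then show ?thesis using cons[rule_format, of 0] lh lastn hd0 len n_def ETH_sym
      by (intro exI[of _ 1] exI[of _ "n - 1"]) auto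
  next
    case False
    show ?thesis
    proof (cases "i = n - 1")
      case True
      have "ETH VU EU (xs ! (n - 2)) (xs ! Suc (n - 2))" using cons len n_def by auto
      moreover have "Suc (n - 2) = i" using True len n_def by simp
      ultimately show ?thesis using lh lastn hd0 len n_def ETH_sym True
        by (intro exI[of _ "n - 2"] exI[of _ 0]) auto
    next
      case F2: False
      have "Suc (i - 1) < length xs" using False i n_def by simp
      then have "ETH VU EU (xs ! (i - 1)) (xs ! Suc (i - 1))" using cons by blast
      moreover have "Suc (i - 1) = i" using False by simp
      moreover have "ETH VU EU (xs ! i) (xs ! Suc i)" using cons i F2 n_def by auto
      ultimately show ?thesis using ETH_sym i F2 False
        by (intro exI[of _ "i - 1"] exI[of _ "Suc i"]) auto
    qed
  qed
  then obtain j j' where "j < n" "j' < n" "j \<noteq> j'" "xs ! j = xs ! j'" using tl by metis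
  then show False using dist n_def by (simp add: nth_eq_iff_index_eq)
qed

lemma H_tree: "is_tree (VTH VU EU) (ETH VU EU)"
  unfolding is_tree_def using sg_H_tree H_conn H_acyclic VTH_Nil by blast

lemma H_td: "tree_decomposition (VHH VU EU) (EHH VU EU) (VTH VU EU) (ETH VU EU) (BH VU)"
  unfolding tree_decomposition_def
proof (intro conjI ballI allI impI)
  show "is_tree (VTH VU EU) (ETH VU EU)" by (rule H_tree)
  show "BH VU x \<subseteq> VHH VU EU" if "x \<in> VTH VU EU" for x using that by (auto simp: VHH_def)
  fix v w assume "EHH VU EU v w"
  then obtain s u w' where "s \<in> VTH VU EU" "EU u w'" "v = sig s u" "w = sig s w'" unfolding EHH_def by blast
  moreover have "u \<in> VU" "w' \<in> VU" using calculation(2) sg unfolding simple_graph_def by auto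
  ultimately show "\<exists>x\<in>VTH VU EU. v \<in> BH VU x \<and> w \<in> BH VU x" by (auto simp: BH_def)
next
  fix v assume "v \<in> VHH VU EU"
  then show "{x \<in> VTH VU EU. v \<in> BH VU x} \<noteq> {}" by (auto simp: VHH_def)
  show "connected_graph {x \<in> VTH VU EU. v \<in> BH VU x} (ETH VU EU)" using H_bag_conn \<open>v \<in> VHH VU EU\<close> .
qed

lemma H_cgraph: "cgraph (VHH VU EU) (EHH VU EU)"
  unfolding cgraph_def simple_graph_def
proof (intro conjI allI impI)
  show "countable (VHH VU EU)" by simp
  fix x y assume "EHH VU EU x y"
  then obtain s u w where s: "s \<in> VTH VU EU" and e: "EU u w" "x = sig s u" "y = sig s w" unfolding EHH_def by blast
  have uw: "u \<in> VU" "w \<in> VU" "u \<noteq> w" "EU w u" using e(1) sg unfolding simple_graph_def by auto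
  show "x \<in> VHH VU EU" "y \<in> VHH VU EU" using s e uw by (auto simp: VHH_def BH_def)
  show "x \<noteq> y" using sig_inj[OF s] e uw by (metis inj_onD)
  show "EHH VU EU y x" unfolding EHH_def using s e uw by blast
qed

end



context
  fixes VT :: "'t set" and ET :: "'t \<Rightarrow> 't \<Rightarrow> bool" and r :: 't
  assumes tree: "is_tree VT ET" and rV: "r \<in> VT"
begin

definition dd :: "'t \<Rightarrow> nat" where
  "dd x = (LEAST n. ((\<lambda>a b. ET a b \<and> a \<in> VT \<and> b \<in> VT) ^^ n) r x)"

definition par :: "'t \<Rightarrow> 't" where
  "par x = (if x = r then r else (SOME y. y \<in> VT \<and> ET y x \<and> Suc (dd y) = dd x))"

lemma sgT: "simple_graph VT ET" using tree unfolding is_tree_def by blast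

lemma ET_sym: "ET a b \<Longrightarrow> ET b a" using sgT unfolding simple_graph_def by blast
lemma ET_V: "ET a b \<Longrightarrow> a \<in> VT \<and> b \<in> VT" using sgT unfolding simple_graph_def by blast
lemma ET_neq: "ET a b \<Longrightarrow> a \<noteq> b" using sgT unfolding simple_graph_def by blast

abbreviation RT where "RT \<equiv> (\<lambda>a b. ET a b \<and> a \<in> VT \<and> b \<in> VT)"

lemma dd_path: "x \<in> VT \<Longrightarrow> (RT ^^ dd x) r x"
proof -
  assume x: "x \<in> VT"
  have conn: "connected_graph VT ET" using tree unfolding is_tree_def by blast
  have h: "RT\<^sup>*\<^sup>* r x"
    using conn rV x unfolding connected_graph_def by blast
  from rtranclp_imp_relpowp[OF h] obtain n where "(RT ^^ n) r x" ..
  then show ?thesis unfolding dd_def by (rule LeastI)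
qed

lemma dd_edge: "ET y x \<Longrightarrow> dd x \<le> Suc (dd y)"
proof -
  assume e: "ET y x"
  then have yV: "y \<in> VT" and xV: "x \<in> VT" using ET_V by auto
  have "(RT ^^ Suc (dd y)) r x"
    by (rule relpowp_Suc_I[OF dd_path[OF yV]]) (use e xV yV in blast)
  then show ?thesis unfolding dd_def by (rule Least_le)
qed

lemma dd_r: "dd r = 0"
  unfolding dd_def by (rule Least_eq_0) (rule relpowp_0_I)

lemma dd_0: "x \<in> VT \<Longrightarrow> dd x = 0 \<Longrightarrow> x = r"
proof -
  assume x: "x \<in> VT" and d: "dd x = 0"
  have "(RT ^^ dd x) r x" using x by (rule dd_path)
  then have "(RT ^^ 0) r x" unfolding d .
  then show "x = r" by (rule relpowp_0_E) simp
qed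

lemma par_props:
  assumes x: "x \<in> VT" "x \<noteq> r"
  shows "par x \<in> VT \<and> ET (par x) x \<and> Suc (dd (par x)) = dd x"
proof -
  have "dd x \<noteq> 0" using dd_0 x by blast
  then obtain n where n: "dd x = Suc n" using not0_implies_Suc by blast
  have "(RT ^^ dd x) r x" using x(1) by (rule dd_path)
  then have "(RT ^^ Suc n) r x" unfolding n .
  then obtain y where y1: "(RT ^^ n) r y" and y2: "RT y x" by (rule relpowp_Suc_E)
  from y2 have y3: "ET y x" "y \<in> VT" by auto
  note y = y1 y3
  have "dd y \<le> n" unfolding dd_def using y(1) by (rule Least_le)
  moreover have "dd x \<le> Suc (dd y)" using dd_edge y(2) .
  ultimately have "y \<in> VT \<and> ET y x \<and> Suc (dd y) = dd x" using n y by simp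
  then have "\<exists>y. y \<in> VT \<and> ET y x \<and> Suc (dd y) = dd x" by blast
  then have "(SOME y. y \<in> VT \<and> ET y x \<and> Suc (dd y) = dd x) \<in> VT \<and> ET (SOME y. y \<in> VT \<and> ET y x \<and> Suc (dd y) = dd x) x \<and> Suc (dd (SOME y. y \<in> VT \<and> ET y x \<and> Suc (dd y) = dd x)) = dd x"
    by (rule someI_ex)
  then show ?thesis unfolding par_def using x(2) by simp
qed

lemma par_V: "x \<in> VT \<Longrightarrow> par x \<in> VT"
  using par_props by (cases "x = r") (auto simp: par_def)

lemma par_dd: "x \<in> VT \<Longrightarrow> dd (par x) = dd x - 1"
  using par_props[of x] by (cases "x = r") (auto simp: par_def dd_r)

lemma pow_V: "x \<in> VT \<Longrightarrow> (par ^^ k) x \<in> VT"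
  by (induction k) (auto simp: par_V)

lemma pow_dd: "x \<in> VT \<Longrightarrow> dd ((par ^^ k) x) = dd x - k"
  by (induction k) (auto simp: par_dd pow_V)

lemma pow_top: "x \<in> VT \<Longrightarrow> (par ^^ dd x) x = r"
  using pow_dd[of x "dd x"] pow_V dd_0 by auto

lemma par_edge: "z \<in> VT \<Longrightarrow> 0 < dd z \<Longrightarrow> ET z (par z)"
  using par_props[of z] dd_r ET_sym by (cases "z = r") auto

lemma tree_edge:
  assumes e: "ET x y"
  shows "(x \<noteq> r \<and> y = par x) \<or> (y \<noteq> r \<and> x = par y)"
proof (rule ccontr)
  assume bad: "\<not> ?thesis"
  have x: "x \<in> VT" and y: "y \<in> VT" using ET_V e by auto
  have xy: "x \<noteq> y" using ET_neq e by auto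
  have d1: "dd y \<le> Suc (dd x)" using dd_edge e .
  have d2: "dd x \<le> Suc (dd y)" using dd_edge ET_sym e by blast
  let ?P = "\<lambda>k z. (par ^^ k) z"
  define Q where "Q i \<longleftrightarrow> (\<exists>j \<le> dd y. ?P i x = ?P j y)" for i
  have Qd: "Q (dd x)" unfolding Q_def using pow_top x y by auto
  define i where "i = (LEAST i. Q i)"
  have Qi: "Q i" unfolding i_def using Qd by (rule LeastI)
  have idx: "i \<le> dd x" unfolding i_def using Qd by (rule Least_le)
  have iminl: "\<not> Q k" if "k < i" for k using that unfolding i_def by (rule not_less_Least)
  obtain j where j: "j \<le> dd y" "?P i x = ?P j y" using Qi Q_def by blast
  have dj: "dd (?P i x) = dd x - i" "dd (?P j y) = dd y - j" using pow_dd x y by auto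
  have j0: "j \<noteq> 0"
  proof
    assume "j = 0"
    then have yi: "?P i x = y" using j by simp
    consider "i = 0" | "i = 1" | "i \<ge> 2" by linarith
    then show False
    proof cases
      case 1 then show False using yi xy by simp
    next
      case 2
      then have "y = par x" using yi by simp
      moreover have "x \<noteq> r" using xy \<open>y = par x\<close> by (auto simp: par_def)
      ultimately show False using bad by blast
    next
      case 3
      have "dd y = dd x - i" using yi dj by simp
      then show False using d2 3 idx by linarith
    qed
  qed
  have ij: "i + j \<ge> 2"
  proof (rule ccontr)
    assume "\<not> i + j \<ge> 2"
    then have "i = 0" "j = 1" using j0 by auto
    then have "x = par y" using j by simp
    moreover have "y \<noteq> r" using xy \<open>x = par y\<close> by (auto simp: par_def)
    ultimately show False using bad by blast
  qed
  define n where "n = i + j + 1"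
  define c where "c k = (if k \<le> i then ?P k x else ?P (n - 1 - k) y)" for k
  define xs where "xs = map c [0..<n]"
  have lenxs: "length xs = n" unfolding xs_def by simp
  have cV: "c k \<in> VT" for k unfolding c_def using pow_V x y by auto
  have inj: "inj_on c {0..<n}"
  proof (rule inj_onI)
    fix k1 k2 assume k1: "k1 \<in> {0..<n}" and k2: "k2 \<in> {0..<n}" and eq: "c k1 = c k2"
    have A: "k1 = k2" if "k1 \<le> i" "\<not> k2 \<le> i" "k1 < n" "k2 < n" "c k1 = c k2" for k1 k2
    proof -
      have e2: "?P k1 x = ?P (n - 1 - k2) y" using that unfolding c_def by simp
      have m: "n - 1 - k2 < j" using that n_def by simp
      show ?thesis
      proof (cases "k1 < i")
        case True
        then have "Q k1" unfolding Q_def using e2 m j(1) by (intro exI[of _ "n - 1 - k2"]) simp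
        then show ?thesis using iminl True by blast
      next
        case False
        then have "k1 = i" using that by simp
        then have "?P (n - 1 - k2) y = ?P j y" using e2 j by simp
        then have "dd y - (n - 1 - k2) = dd y - j" using pow_dd y by metis
        then show ?thesis using m j(1) by linarith
      qed
    qed
    show "k1 = k2"
    proof (cases "k1 \<le> i")
      case True
      show ?thesis
      proof (cases "k2 \<le> i")
        case True
        then have "?P k1 x = ?P k2 x" using eq \<open>k1 \<le> i\<close> unfolding c_def by simp
        then have "dd x - k1 = dd x - k2" using pow_dd x by metis
        then show ?thesis using True \<open>k1 \<le> i\<close> idx by linarith
      next
        case False then show ?thesis using A[of k1 k2] True k1 k2 eq by simp
      qed
    next
      case False
      show ?thesis
      proof (cases "k2 \<le> i")
        case True then show ?thesis using A[of k2 k1] False k1 k2 eq by simp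
      next
        case F2: False
        then have "?P (n - 1 - k1) y = ?P (n - 1 - k2) y" using eq False unfolding c_def by simp
        then have "dd y - (n - 1 - k1) = dd y - (n - 1 - k2)" using pow_dd y by metis
        then show ?thesis using False F2 k1 k2 n_def j(1) by auto
      qed
    qed
  qed
  have edges: "ET (c k) (c (Suc k))" if "Suc k < n" for k
  proof -
    consider "Suc k \<le> i" | "k = i" | "i < k" by linarith
    then show ?thesis
    proof cases
      case 1
      have z: "?P k x \<in> VT" "0 < dd (?P k x)" using pow_V pow_dd x 1 idx by auto
      have "ET (?P k x) (par (?P k x))" by (rule par_edge[OF z])
      then show ?thesis using 1 unfolding c_def by simp
    next
      case 2
      have z: "?P (j - 1) y \<in> VT" "0 < dd (?P (j - 1) y)" using pow_V pow_dd y j j0 by auto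
      have "ET (?P (j - 1) y) (par (?P (j - 1) y))" by (rule par_edge[OF z])
      moreover have "par (?P (j - 1) y) = ?P j y" using j0
        by (metis Suc_pred' bot_nat_0.not_eq_extremum comp_apply funpow.simps(2))
      ultimately have "ET (?P j y) (?P (j - 1) y)" using ET_sym by metis
      moreover have "n - 1 - Suc k = j - 1" using 2 n_def by simp
      ultimately show ?thesis using 2 j unfolding c_def by simp
    next
      case 3
      define m where "m = n - 2 - k"
      have m: "n - 1 - k = Suc m" "n - 1 - Suc k = m" "m < j" using 3 that n_def m_def by auto
      have z: "?P m y \<in> VT" "0 < dd (?P m y)" using pow_V pow_dd y m j by auto
      have "ET (?P m y) (par (?P m y))" by (rule par_edge[OF z])
      then have "ET (?P (Suc m) y) (?P m y)" using ET_sym by simp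
      then show ?thesis using 3 m unfolding c_def by simp
    qed
  qed
  have "has_cycle VT ET" unfolding has_cycle_def
  proof (intro exI[of _ xs] conjI allI impI)
    show "3 \<le> length xs" using lenxs n_def ij by simp
    show "distinct xs" unfolding xs_def using inj by (simp add: distinct_map)
    show "set xs \<subseteq> VT" unfolding xs_def using cV by auto
    fix k assume "Suc k < length xs"
    then show "ET (xs ! k) (xs ! Suc k)" using edges lenxs unfolding xs_def by simp
  next
    have "last xs = c (n - 1)" unfolding xs_def n_def by (simp add: last_map)
    also have "\<dots> = y" unfolding c_def n_def using j0 by simp
    finally have l: "last xs = y" .
    have "hd xs = c 0" unfolding xs_def n_def by (simp add: upt_conv_Cons del: upt_Suc)
    also have "\<dots> = x" unfolding c_def by simp
    finally show "ET (last xs) (hd xs)" using l ET_sym e by simp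
  qed
  then show False using tree unfolding is_tree_def by blast
qed

lemma parent_closed:
  assumes S: "S \<subseteq> VT" "connected_graph S ET" and m: "m \<in> S" "\<forall>y\<in>S. dd m \<le> dd y"
    and x: "x \<in> S" "x \<noteq> m"
  shows "par x \<in> S"
proof (rule ccontr)
  assume nS: "par x \<notin> S"
  define D where "D = {z. \<exists>k. (par ^^ k) z = x}"
  have step: "z \<in> D" if "(\<lambda>a b. ET a b \<and> a \<in> S \<and> b \<in> S)\<^sup>*\<^sup>* x z" for z
    using that
  proof (induction rule: rtranclp_induct)
    case base then show ?case unfolding D_def by (auto intro: exI[of _ 0])
  next
    case (step z z')
    then obtain k where k: "(par ^^ k) z = x" unfolding D_def by blast
    from step(2) have e: "ET z z'" "z \<in> S" "z' \<in> S" by auto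
    from tree_edge[OF e(1)] show ?case
    proof
      assume "z \<noteq> r \<and> z' = par z"
      then have z': "z' = par z" by simp
      show ?thesis
      proof (cases k)
        case 0 then show ?thesis using k z' e nS by simp
      next
        case (Suc k')
        then have "(par ^^ k') z' = x" using k z' by (simp add: funpow_Suc_right del: funpow.simps)
        then show ?thesis unfolding D_def by blast
      qed
    next
      assume "z' \<noteq> r \<and> z = par z'"
      then have "(par ^^ Suc k) z' = x" using k by (simp add: funpow_Suc_right del: funpow.simps)
      then show ?thesis unfolding D_def by blast
    qed
  qed
  have "(\<lambda>a b. ET a b \<and> a \<in> S \<and> b \<in> S)\<^sup>*\<^sup>* x m" using S m x unfolding connected_graph_def by blast
  then have "m \<in> D" by (rule step)
  then obtain k where k: "(par ^^ k) m = x" unfolding D_def by blast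
  have mV: "m \<in> VT" using S m by auto
  have "dd ((par ^^ k) m) = dd m - k" by (rule pow_dd[OF mV])
  then have "dd x = dd m - k" using k by simp
  moreover have "dd m \<le> dd x" using m x by blast
  ultimately have "k = 0 \<or> dd m = 0" by linarith
  then show False
  proof
    assume "k = 0" then show False using k x by simp
  next
    assume "dd m = 0"
    then have "m = r" using dd_0 mV by blast
    then have "(par ^^ k) m = m" by (induction k) (auto simp: par_def)
    then show False using k x by simp
  qed
qed

end



lemma clique_finite:
  assumes noK: "\<not> contains VU EU K_aleph0_V K_aleph0_E"
    and C: "\<forall>a\<in>C. \<forall>b\<in>C. a \<noteq> b \<longrightarrow> EU a b" "C \<subseteq> VU"
  shows "finite C"
proof (rule ccontr)
  assume "infinite C"
  then obtain f :: "nat \<Rightarrow> _" where fF: "inj f" "range f \<subseteq> C" using infinite_countable_subset by blast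
  have "contains VU EU K_aleph0_V K_aleph0_E" unfolding contains_def K_aleph0_V_def K_aleph0_E_def
  proof (intro exI[of _ f] conjI ballI impI)
    show "inj_on f UNIV" using fF by simp
    show "range f \<subseteq> VU" using fF C by blast
    fix x y :: nat assume "x \<noteq> y"
    then have "f x \<noteq> f y" using fF by (metis injD)
    then show "EU (f x) (f y)" using C fF by blast
  qed
  then show False using noK by blast
qed

context
  fixes VU :: "nat set" and EU :: "nat \<Rightarrow> nat \<Rightarrow> bool"
    and V :: "nat set" and E :: "nat \<Rightarrow> nat \<Rightarrow> bool"
    and VT :: "nat set" and ET :: "nat \<Rightarrow> nat \<Rightarrow> bool" and B :: "nat \<Rightarrow> nat set"
    and g :: "nat \<Rightarrow> nat \<Rightarrow> nat" and r :: nat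
  assumes sg: "simple_graph VU EU"
    and noK: "\<not> contains VU EU K_aleph0_V K_aleph0_E"
    and sgG: "simple_graph V E"
    and td: "tree_decomposition V E VT ET B"
    and gx: "\<And>x. x \<in> VT \<Longrightarrow> inj_on (g x) (B x) \<and> g x ` B x \<subseteq> VU \<and>
               (\<forall>v\<in>B x. \<forall>w\<in>B x. torso_E E ET B x v w \<longrightarrow> EU (g x v) (g x w))"
    and rV: "r \<in> VT"
begin

lemma treeG: "is_tree VT ET" using td unfolding tree_decomposition_def by blast

abbreviation "d' \<equiv> dd VT ET r"
abbreviation "p' \<equiv> par VT ET r"

definition adh :: "nat \<Rightarrow> nat set" where "adh x = B x \<inter> B (p' x)"

definition lab :: "nat \<Rightarrow> lab" where
  "lab x = (map (\<lambda>v. (g x v, g (p' x) v)) (sorted_list_of_set (adh x)), x)"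

fun phiN :: "nat \<Rightarrow> nat \<Rightarrow> node" where
  "phiN 0 x = []"
| "phiN (Suc n) x = (if x = r then [] else lab x # phiN n (p' x))"

definition phi :: "nat \<Rightarrow> node" where "phi x = phiN (d' x) x"

lemma phi_r: "phi r = []"
  unfolding phi_def by (simp add: dd_r[OF treeG rV])

lemma par_facts: "x \<in> VT \<Longrightarrow> x \<noteq> r \<Longrightarrow> p' x \<in> VT \<and> ET (p' x) x \<and> Suc (d' (p' x)) = d' x"
  using par_props[OF treeG rV] by blast

lemma phi_Cons: "x \<in> VT \<Longrightarrow> x \<noteq> r \<Longrightarrow> phi x = lab x # phi (p' x)"
proof -
  assume x: "x \<in> VT" "x \<noteq> r"
  then have "d' x = Suc (d' (p' x))" using par_facts by simp
  then show ?thesis unfolding phi_def using x by simp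
qed

lemma BV: "x \<in> VT \<Longrightarrow> B x \<subseteq> V" using td unfolding tree_decomposition_def by blast

lemma adh_clique:
  assumes x: "x \<in> VT" "x \<noteq> r"
  shows "\<forall>a\<in>g x ` adh x. \<forall>b\<in>g x ` adh x. a \<noteq> b \<longrightarrow> EU a b"
    and "\<forall>a\<in>g (p' x) ` adh x. \<forall>b\<in>g (p' x) ` adh x. a \<noteq> b \<longrightarrow> EU a b"
    and "g x ` adh x \<subseteq> VU" "g (p' x) ` adh x \<subseteq> VU"
proof -
  have px: "p' x \<in> VT" "ET (p' x) x" using par_facts x by auto
  have ex: "ET x (p' x)" using px ET_sym[OF treeG rV] by blast
  show "\<forall>a\<in>g x ` adh x. \<forall>b\<in>g x ` adh x. a \<noteq> b \<longrightarrow> EU a b"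
  proof (intro ballI impI)
    fix a b assume "a \<in> g x ` adh x" "b \<in> g x ` adh x" "a \<noteq> b"
    then obtain v w where vw: "v \<in> adh x" "w \<in> adh x" "a = g x v" "b = g x w" "v \<noteq> w" by blast
    then have "torso_E E ET B x v w" unfolding torso_E_def adh_def using ex by blast
    then show "EU a b" using gx[OF x(1)] vw unfolding adh_def by blast
  qed
  show "\<forall>a\<in>g (p' x) ` adh x. \<forall>b\<in>g (p' x) ` adh x. a \<noteq> b \<longrightarrow> EU a b"
  proof (intro ballI impI)
    fix a b assume "a \<in> g (p' x) ` adh x" "b \<in> g (p' x) ` adh x" "a \<noteq> b"
    then obtain v w where vw: "v \<in> adh x" "w \<in> adh x" "a = g (p' x) v" "b = g (p' x) w" "v \<noteq> w" by blast
    then have "torso_E E ET B (p' x) v w" unfolding torso_E_def adh_def using px by blast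
    then show "EU a b" using gx[OF px(1)] vw unfolding adh_def by blast
  qed
  show "g x ` adh x \<subseteq> VU" "g (p' x) ` adh x \<subseteq> VU" using gx[OF x(1)] gx[OF px(1)] unfolding adh_def by auto
qed

lemma adh_finite: "x \<in> VT \<Longrightarrow> x \<noteq> r \<Longrightarrow> finite (adh x)"
proof -
  assume x: "x \<in> VT" "x \<noteq> r"
  have "finite (g x ` adh x)" using clique_finite[OF noK] adh_clique[OF x] by blast
  moreover have "inj_on (g x) (adh x)" using gx[OF x(1)] unfolding adh_def by (auto intro: inj_on_subset)
  ultimately show ?thesis using finite_imageD by blast
qed

lemma lab_set: "x \<in> VT \<Longrightarrow> x \<noteq> r \<Longrightarrow> set (fst (lab x)) = (\<lambda>v. (g x v, g (p' x) v)) ` adh x"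
  using adh_finite unfolding lab_def by simp

lemma lab_valid: "x \<in> VT \<Longrightarrow> x \<noteq> r \<Longrightarrow> valid VU EU (lab x)"
proof -
  assume x: "x \<in> VT" "x \<noteq> r"
  have px: "p' x \<in> VT" using par_facts x by auto
  have fin: "finite (adh x)" using adh_finite x .
  have i1: "inj_on (g x) (adh x)" using gx[OF x(1)] unfolding adh_def by (auto intro: inj_on_subset)
  have i2: "inj_on (g (p' x)) (adh x)" using gx[OF px] unfolding adh_def by (auto intro: inj_on_subset)
  have s1: "fst ` set (fst (lab x)) = g x ` adh x" using lab_set[OF x] by force
  have s2: "snd ` set (fst (lab x)) = g (p' x) ` adh x" using lab_set[OF x] by force
  have d1: "distinct (map fst (fst (lab x)))" unfolding lab_def using fin i1
    by (simp add: distinct_map o_def)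
  have d2: "distinct (map snd (fst (lab x)))" unfolding lab_def using fin i2
    by (simp add: distinct_map o_def)
  show ?thesis unfolding valid_def clq_def using d1 d2 s1 s2 adh_clique[OF x] by simp
qed

lemma phi_VTH: "x \<in> VT \<Longrightarrow> phi x \<in> VTH VU EU"
proof (induction "d' x" arbitrary: x rule: less_induct)
  case less
  show ?case
  proof (cases "x = r")
    case True then show ?thesis using phi_r VTH_Nil[OF sg] by simp
  next
    case False
    have "p' x \<in> VT" "d' (p' x) < d' x" using par_facts[OF less.prems False] by auto
    then have "phi (p' x) \<in> VTH VU EU" using less.hyps by blast
    then show ?thesis using phi_Cons[OF less.prems False] lab_valid[OF less.prems False] VTH_Cons[OF sg] by simp
  qed
qed

lemma phi_inj: "x \<in> VT \<Longrightarrow> y \<in> VT \<Longrightarrow> phi x = phi y \<Longrightarrow> x = y"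
proof -
  assume x: "x \<in> VT" and y: "y \<in> VT" and eq: "phi x = phi y"
  show "x = y"
  proof (cases "x = r")
    case True
    then show ?thesis using eq phi_r phi_Cons[OF y] by (cases "y = r") auto
  next
    case False
    show ?thesis
    proof (cases "y = r")
      case True then show ?thesis using eq phi_r phi_Cons[OF x False] by simp
    next
      case F2: False
      have "lab x = lab y" using eq phi_Cons[OF x False] phi_Cons[OF y F2] by simp
      then show ?thesis unfolding lab_def by simp
    qed
  qed
qed

definition topn :: "nat \<Rightarrow> nat" where
  "topn v = (SOME x. x \<in> VT \<and> v \<in> B x \<and> (\<forall>y. y \<in> VT \<and> v \<in> B y \<longrightarrow> d' x \<le> d' y))"

lemma topn_props:
  assumes v: "v \<in> V"
  shows "topn v \<in> VT \<and> v \<in> B (topn v) \<and> (\<forall>y. y \<in> VT \<and> v \<in> B y \<longrightarrow> d' (topn v) \<le> d' y)"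
proof -
  obtain x0 where "x0 \<in> VT \<and> v \<in> B x0" using td v unfolding tree_decomposition_def by blast
  then have "\<exists>x. (x \<in> VT \<and> v \<in> B x) \<and> (\<forall>y. y \<in> VT \<and> v \<in> B y \<longrightarrow> d' x \<le> d' y)"
    by (rule ex_has_least_nat)
  then have "\<exists>x. x \<in> VT \<and> v \<in> B x \<and> (\<forall>y. y \<in> VT \<and> v \<in> B y \<longrightarrow> d' x \<le> d' y)" by blast
  then show ?thesis unfolding topn_def by (rule someI_ex)
qed

definition femb :: "nat \<Rightarrow> vtx" where "femb v = (phi (topn v), g (topn v) v)"

lemma map_of_lab_in:
  assumes x: "x \<in> VT" "x \<noteq> r" and v: "v \<in> adh x"
  shows "map_of (fst (lab x)) (g x v) = Some (g (p' x) v)"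
proof (rule map_of_is_SomeI)
  show "distinct (map fst (fst (lab x)))" using lab_valid[OF x] unfolding valid_def by blast
  show "(g x v, g (p' x) v) \<in> set (fst (lab x))" using lab_set[OF x] v by blast
qed

lemma map_of_lab_out:
  assumes x: "x \<in> VT" "x \<noteq> r" and v: "v \<in> B x" "v \<notin> adh x"
  shows "map_of (fst (lab x)) (g x v) = None"
proof -
  have "inj_on (g x) (B x)" using gx[OF x(1)] by blast
  then have "g x v \<notin> g x ` adh x" using v unfolding adh_def by (auto dest: inj_onD)
  then show ?thesis unfolding map_of_eq_None_iff using lab_set[OF x] by force
qed

lemma sig_phi:
  assumes "x \<in> VT" "v \<in> B x"
  shows "sig (phi x) (g x v) = femb v"
  using assms
proof (induction "d' x" arbitrary: x rule: less_induct)
  case less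
  have x: "x \<in> VT" "v \<in> B x" by fact+
  have vV: "v \<in> V" using BV x by blast
  note tp = topn_props[OF vV]
  define S where "S = {y \<in> VT. v \<in> B y}"
  have S: "S \<subseteq> VT" "connected_graph S ET" using td vV unfolding S_def tree_decomposition_def by auto
  have mS: "topn v \<in> S" "\<forall>y\<in>S. d' (topn v) \<le> d' y" using tp unfolding S_def by auto
  show ?case
  proof (cases "x = topn v")
    case True
    show ?thesis
    proof (cases "x = r")
      case True
      then show ?thesis using \<open>x = topn v\<close> phi_r unfolding femb_def by simp
    next
      case False
      have pf: "p' x \<in> VT" "Suc (d' (p' x)) = d' x" using par_facts[OF x(1) False] by auto
      have "v \<notin> B (p' x)"
      proof
        assume "v \<in> B (p' x)"
        then have "d' x \<le> d' (p' x)" using tp \<open>x = topn v\<close> pf by blast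
        then show False using pf by simp
      qed
      then have "v \<notin> adh x" unfolding adh_def by blast
      then have "map_of (fst (lab x)) (g x v) = None" using map_of_lab_out[OF x(1) False x(2)] by blast
      then show ?thesis using phi_Cons[OF x(1) False] \<open>x = topn v\<close> unfolding femb_def by simp
    qed
  next
    case False
    have xS: "x \<in> S" using x S_def by blast
    have pS: "p' x \<in> S" using parent_closed[OF treeG rV S mS xS] False by blast
    have xr: "x \<noteq> r"
    proof
      assume "x = r"
      then have "d' x = 0" using dd_r[OF treeG rV] by simp
      then have "d' (topn v) = 0" using mS xS by fastforce
      then have "topn v = r" using dd_0[OF treeG rV] tp by blast
      then show False using False \<open>x = r\<close> by simp
    qed
    have pf: "p' x \<in> VT" "Suc (d' (p' x)) = d' x" using par_facts[OF x(1) xr] by auto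
    have vA: "v \<in> adh x" using pS x unfolding adh_def S_def by blast
    have IH: "sig (phi (p' x)) (g (p' x) v) = femb v" using less.hyps[of "p' x"] pf pS S_def by auto
    have "sig (phi x) (g x v) = sig (lab x # phi (p' x)) (g x v)" using phi_Cons[OF x(1) xr] by simp
    also have "\<dots> = sig (phi (p' x)) (g (p' x) v)" using map_of_lab_in[OF x(1) xr vA] by simp
    finally show ?thesis using IH by simp
  qed
qed

lemma f_embeds: "contains (VHH VU EU) (EHH VU EU) V E"
  unfolding contains_def
proof (intro exI[of _ femb] conjI ballI impI)
  show "inj_on femb V"
  proof (rule inj_onI)
    fix v w assume v: "v \<in> V" and w: "w \<in> V" and eq: "femb v = femb w"
    have "phi (topn v) = phi (topn w)" "g (topn v) v = g (topn w) w" using eq unfolding femb_def by auto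
    then have t: "topn v = topn w" using phi_inj topn_props v w by blast
    then have "g (topn v) v = g (topn v) w" using \<open>g (topn v) v = g (topn w) w\<close> by simp
    moreover have "inj_on (g (topn v)) (B (topn v))" using gx topn_props[OF v] by blast
    ultimately show "v = w" using topn_props[OF v] topn_props[OF w] t by (auto dest: inj_onD)
  qed
  show "femb ` V \<subseteq> VHH VU EU"
  proof
    fix a assume "a \<in> femb ` V"
    then obtain v where v: "v \<in> V" "a = femb v" by blast
    note tp = topn_props[OF v(1)]
    have "a = sig (phi (topn v)) (g (topn v) v)" using sig_phi tp v by simp
    moreover have "g (topn v) v \<in> VU" using gx tp by blast
    ultimately show "a \<in> VHH VU EU" unfolding VHH_def BH_def using phi_VTH tp by blast
  qed
  fix v w assume "v \<in> V" "w \<in> V" "E v w"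
  then obtain x where x: "x \<in> VT" "v \<in> B x" "w \<in> B x" using td unfolding tree_decomposition_def by blast
  have "v \<noteq> w" using sgG \<open>E v w\<close> unfolding simple_graph_def by blast
  then have "torso_E E ET B x v w" unfolding torso_E_def using x \<open>E v w\<close> by blast
  then have "EU (g x v) (g x w)" using gx x by blast
  then have "EHH VU EU (sig (phi x) (g x v)) (sig (phi x) (g x w))"
    unfolding EHH_def using phi_VTH x by blast
  then show "EHH VU EU (femb v) (femb w)" using sig_phi x by simp
qed

end



definition mapE :: "('a \<Rightarrow> 'b) \<Rightarrow> ('a \<Rightarrow> 'a \<Rightarrow> bool) \<Rightarrow> 'b \<Rightarrow> 'b \<Rightarrow> bool" where
  "mapE g E a b \<longleftrightarrow> (\<exists>v w. E v w \<and> a = g v \<and> b = g w)"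

lemma mapE_img: "inj g \<Longrightarrow> mapE g E (g v) (g w) \<longleftrightarrow> E v w"
  unfolding mapE_def by (auto dest: injD)

lemma sg_map:
  assumes g: "inj g" and s: "simple_graph V E"
  shows "simple_graph (g ` V) (mapE g E)"
  unfolding simple_graph_def
proof (intro allI impI)
  fix a b assume "mapE g E a b"
  then obtain v w where e: "E v w" "a = g v" "b = g w" unfolding mapE_def by blast
  then have vw: "v \<in> V" "w \<in> V" "v \<noteq> w" "E w v" using s unfolding simple_graph_def by blast+
  have "g v \<noteq> g w" using vw(3) g by (metis injD)
  moreover have "mapE g E (g w) (g v)" unfolding mapE_def using vw(4) by blast
  ultimately show "a \<in> g ` V \<and> b \<in> g ` V \<and> a \<noteq> b \<and> mapE g E b a" using e vw by blast
qed

lemma rtr_map: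
  assumes "inj g" "(\<lambda>a b. E a b \<and> a \<in> V \<and> b \<in> V)\<^sup>*\<^sup>* x y"
  shows "(\<lambda>a b. mapE g E a b \<and> a \<in> g ` V \<and> b \<in> g ` V)\<^sup>*\<^sup>* (g x) (g y)"
  using assms(2)
proof (induction rule: rtranclp_induct)
  case base then show ?case by simp
next
  case (step y z)
  from step(2) have yz: "E y z" "y \<in> V" "z \<in> V" by auto
  have "mapE g E (g y) (g z)" unfolding mapE_def using yz(1) by blast
  then have "(\<lambda>a b. mapE g E a b \<and> a \<in> g ` V \<and> b \<in> g ` V) (g y) (g z)" using yz by blast
  with step(3) show ?case by (rule rtranclp.rtrancl_into_rtrancl)
qed

lemma conn_map:
  assumes g: "inj g" and c: "connected_graph V E"
  shows "connected_graph (g ` V) (mapE g E)"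
  unfolding connected_graph_def
proof (intro ballI)
  fix a b assume "a \<in> g ` V" "b \<in> g ` V"
  then obtain x y where xy: "x \<in> V" "y \<in> V" "a = g x" "b = g y" by blast
  have "(\<lambda>a b. E a b \<and> a \<in> V \<and> b \<in> V)\<^sup>*\<^sup>* x y" using c xy unfolding connected_graph_def by blast
  then show "(\<lambda>a b. mapE g E a b \<and> a \<in> g ` V \<and> b \<in> g ` V)\<^sup>*\<^sup>* a b" unfolding xy(3,4) by (rule rtr_map[OF g])
qed

lemma cycle_map:
  assumes g: "inj g" and c: "has_cycle (g ` V) (mapE g E)"
  shows "has_cycle V E"
proof -
  obtain xs where xs: "length xs \<ge> 3" "distinct xs" "set xs \<subseteq> g ` V"
    "\<forall>i. Suc i < length xs \<longrightarrow> mapE g E (xs ! i) (xs ! Suc i)" "mapE g E (last xs) (hd xs)"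
    using c unfolding has_cycle_def by blast
  define ys where "ys = map (inv g) xs"
  have ne: "xs \<noteq> []" using xs by auto
  have gi: "g (inv g a) = a" if "a \<in> set xs" for a using that xs(3) g by (auto simp: f_inv_into_f)
  have E: "E (inv g a) (inv g b)" if "mapE g E a b" for a b
    using that g unfolding mapE_def by auto
  show ?thesis unfolding has_cycle_def
  proof (intro exI[of _ ys] conjI allI impI)
    show "3 \<le> length ys" using xs ys_def by simp
    have "inj_on (inv g) (set xs)" unfolding inj_on_def using gi by metis
    then show "distinct ys" unfolding ys_def using xs(2) by (simp add: distinct_map)
    show "set ys \<subseteq> V" unfolding ys_def using xs(3) g by auto
    fix i assume "Suc i < length ys"
    then show "E (ys ! i) (ys ! Suc i)" using xs(4) E unfolding ys_def by simp
  next
    show "E (last ys) (hd ys)" unfolding ys_def using ne E xs(5) by (simp add: last_map hd_map)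
  qed
qed

lemma tree_map: "inj h \<Longrightarrow> is_tree VT ET \<Longrightarrow> is_tree (h ` VT) (mapE h ET)"
  unfolding is_tree_def using sg_map conn_map cycle_map by blast

lemma td_map:
  assumes g: "inj g" and h: "inj h" and td: "tree_decomposition V E VT ET B"
  shows "tree_decomposition (g ` V) (mapE g E) (h ` VT) (mapE h ET) (\<lambda>t. g ` B (inv h t))"
  unfolding tree_decomposition_def
proof (intro conjI ballI allI impI)
  show "is_tree (h ` VT) (mapE h ET)" using tree_map h td unfolding tree_decomposition_def by blast
  show "g ` B (inv h t) \<subseteq> g ` V" if tt: "t \<in> h ` VT" for t
  proof -
    obtain x where x: "x \<in> VT" "t = h x" using tt by blast
    then have "inv h t = x" using h by simp
    moreover have "B x \<subseteq> V" using td x unfolding tree_decomposition_def by blast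
    ultimately show ?thesis by blast
  qed
  fix a b assume "mapE g E a b"
  then obtain v w where "E v w" "a = g v" "b = g w" unfolding mapE_def by blast
  then obtain x where "x \<in> VT" "v \<in> B x" "w \<in> B x" using td unfolding tree_decomposition_def by blast
  then show "\<exists>t\<in>h ` VT. a \<in> g ` B (inv h t) \<and> b \<in> g ` B (inv h t)"
    using \<open>a = g v\<close> \<open>b = g w\<close> h by (intro bexI[of _ "h x"]) auto
next
  fix a assume "a \<in> g ` V"
  then obtain v where v: "v \<in> V" "a = g v" by blast
  have eq: "{t \<in> h ` VT. a \<in> g ` B (inv h t)} = h ` {x \<in> VT. v \<in> B x}"
    using v g h by (auto dest: injD)
  show "{t \<in> h ` VT. a \<in> g ` B (inv h t)} \<noteq> {}" using eq td v unfolding tree_decomposition_def by auto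
  show "connected_graph {t \<in> h ` VT. a \<in> g ` B (inv h t)} (mapE h ET)"
    unfolding eq using conn_map h td v unfolding tree_decomposition_def by blast
qed

lemma torso_map:
  assumes g: "inj g" and h: "inj h"
    and t: "torso_E (mapE g E) (mapE h ET) (\<lambda>t. g ` B (inv h t)) (h x) (g v) (g w)"
  shows "torso_E E ET B x v w"
proof -
  have vw: "v \<in> B x" "w \<in> B x" "v \<noteq> w" using t g h unfolding torso_E_def by (auto dest: injD)
  from t have "mapE g E (g v) (g w) \<or> (\<exists>y. mapE h ET (h x) y \<and> g v \<in> g ` B (inv h y) \<and> g w \<in> g ` B (inv h y))"
    unfolding torso_E_def by blast
  then have "E v w \<or> (\<exists>y. ET x y \<and> v \<in> B y \<and> w \<in> B y)"
  proof
    assume "mapE g E (g v) (g w)" then show ?thesis using mapE_img[OF g] by blast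
  next
    assume "\<exists>y. mapE h ET (h x) y \<and> g v \<in> g ` B (inv h y) \<and> g w \<in> g ` B (inv h y)"
    then obtain y where "mapE h ET (h x) y" "g v \<in> g ` B (inv h y)" "g w \<in> g ` B (inv h y)" by blast
    then obtain y0 where "ET x y0" "y = h y0" using h unfolding mapE_def by (auto dest: injD)
    then show ?thesis using \<open>g v \<in> g ` B (inv h y)\<close> \<open>g w \<in> g ` B (inv h y)\<close> g h by (auto dest: injD)
  qed
  then show ?thesis using vw unfolding torso_E_def by blast
qed

lemma contains_map_torso:
  assumes g: "inj g" and h: "inj h" and c: "contains VU EU (B x) (torso_E E ET B x)"
  shows "contains VU EU (g ` B (inv h (h x))) (torso_E (mapE g E) (mapE h ET) (\<lambda>t. g ` B (inv h t)) (h x))"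
proof -
  obtain F where F: "inj_on F (B x)" "F ` B x \<subseteq> VU" "\<forall>a\<in>B x. \<forall>b\<in>B x. torso_E E ET B x a b \<longrightarrow> EU (F a) (F b)"
    using c unfolding contains_def by blast
  have hx: "inv h (h x) = x" using h by simp
  show ?thesis unfolding contains_def hx
  proof (intro exI[of _ "F \<circ> inv g"] conjI ballI impI)
    show "inj_on (F \<circ> inv g) (g ` B x)" using F(1) g
      by (auto simp: inj_on_def)
    show "(F \<circ> inv g) ` g ` B x \<subseteq> VU" using F(2) g by auto
    fix a b assume "a \<in> g ` B x" "b \<in> g ` B x"
      "torso_E (mapE g E) (mapE h ET) (\<lambda>t. g ` B (inv h t)) (h x) a b"
    then obtain v w where "v \<in> B x" "w \<in> B x" "a = g v" "b = g w"
      "torso_E (mapE g E) (mapE h ET) (\<lambda>t. g ` B (inv h t)) (h x) (g v) (g w)" by blast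
    then show "EU ((F \<circ> inv g) a) ((F \<circ> inv g) b)" using torso_map[OF g h] F(3) g by auto
  qed
qed

lemma in_D_map:
  fixes g :: "'v \<Rightarrow> nat" and h :: "'t \<Rightarrow> nat" and V :: "'v set" and VT :: "'t set"
  assumes g: "inj g" and h: "inj h" and td: "tree_decomposition V E VT ET B"
    and c: "\<forall>x\<in>VT. contains VU EU (B x) (torso_E E ET B x)"
  shows "in_D VU EU (g ` V) (mapE g E)"
  unfolding in_D_def
proof (intro exI conjI)
  show "tree_decomposition (g ` V) (mapE g E) (h ` VT) (mapE h ET) (\<lambda>t. g ` B (inv h t))"
    by (rule td_map[OF g h td])
  show "\<forall>t\<in>h ` VT. contains VU EU (g ` B (inv h t)) (torso_E (mapE g E) (mapE h ET) (\<lambda>t. g ` B (inv h t)) t)"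
    using contains_map_torso[OF g h] c by blast
qed

lemma contains_map: "inj g \<Longrightarrow> contains VH EH V E \<Longrightarrow> contains (g ` VH) (mapE g EH) V E"
  unfolding contains_def
  apply clarify
  subgoal for F by (rule exI[of _ "g \<circ> F"]) (auto simp: mapE_img inj_on_def dest: injD)
  done

theorem main_nat:
  fixes VU :: "nat set"
  assumes sg: "simple_graph VU EU"
    and noK: "\<not> contains VU EU K_aleph0_V K_aleph0_E"
  shows "\<exists>VH EH. cgraph VH EH \<and> in_D VU EU VH EH \<and>
           (\<forall>V E. cgraph V E \<and> in_D VU EU V E \<longrightarrow> contains VH EH V E)"
proof (intro exI conjI allI impI)
  let ?g = "to_nat :: vtx \<Rightarrow> nat"
  let ?h = "to_nat :: node \<Rightarrow> nat"
  have cg: "simple_graph (VHH VU EU) (EHH VU EU)" using H_cgraph[OF sg] unfolding cgraph_def by blast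
  have "simple_graph (?g ` VHH VU EU) (mapE ?g (EHH VU EU))" by (rule sg_map[OF inj_to_nat cg])
  moreover have "countable (?g ` VHH VU EU)" by simp
  ultimately show "cgraph (?g ` VHH VU EU) (mapE ?g (EHH VU EU))" unfolding cgraph_def by blast
  have tdH: "tree_decomposition (VHH VU EU) (EHH VU EU) (VTH VU EU) (ETH VU EU) (BH VU)" by (rule H_td[OF sg])
  have cH: "\<forall>x\<in>VTH VU EU. contains VU EU (BH VU x) (torso_E (EHH VU EU) (ETH VU EU) (BH VU) x)"
    using torso_H[OF sg] by blast
  show "in_D VU EU (?g ` VHH VU EU) (mapE ?g (EHH VU EU))"
    by (rule in_D_map[OF inj_to_nat inj_to_nat tdH cH])
  fix V E assume VE: "cgraph V E \<and> in_D VU EU V E"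
  then have sgG: "simple_graph V E" unfolding cgraph_def by blast
  from VE have "in_D VU EU V E" by blast
  then obtain VT :: "nat set" and ET B where td: "tree_decomposition V E VT ET B"
    and c: "\<forall>x\<in>VT. contains VU EU (B x) (torso_E E ET B x)"
    unfolding in_D_def by blast
  define g where "g x = (SOME F. inj_on F (B x) \<and> F ` B x \<subseteq> VU \<and>
      (\<forall>v\<in>B x. \<forall>w\<in>B x. torso_E E ET B x v w \<longrightarrow> EU (F v) (F w)))" for x
  have gx: "inj_on (g x) (B x) \<and> g x ` B x \<subseteq> VU \<and>
      (\<forall>v\<in>B x. \<forall>w\<in>B x. torso_E E ET B x v w \<longrightarrow> EU (g x v) (g x w))" if xT: "x \<in> VT" for x
  proof -
    have "\<exists>F. inj_on F (B x) \<and> F ` B x \<subseteq> VU \<and>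
      (\<forall>v\<in>B x. \<forall>w\<in>B x. torso_E E ET B x v w \<longrightarrow> EU (F v) (F w))"
      using c xT unfolding contains_def by blast
    then show ?thesis unfolding g_def by (rule someI_ex)
  qed
  have "VT \<noteq> {}" using td unfolding tree_decomposition_def is_tree_def by blast
  then obtain r where r: "r \<in> VT" by blast
  have "contains (VHH VU EU) (EHH VU EU) V E"
    by (rule f_embeds[OF sg noK sgG td gx r])
  then show "contains (?g ` VHH VU EU) (mapE ?g (EHH VU EU)) V E" by (rule contains_map[OF inj_to_nat])
qed

lemma contains_transfer:
  fixes VU :: "'u set" and X :: "'b set"
  assumes e: "inj_on e VU"
  shows "contains VU EU X Y \<longleftrightarrow>
    contains (e ` VU) (\<lambda>a b. \<exists>u\<in>VU. \<exists>w\<in>VU. EU u w \<and> a = e u \<and> b = e w) X Y"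
proof
  assume "contains VU EU X Y"
  then obtain F where F: "inj_on F X" "F ` X \<subseteq> VU" "\<forall>x\<in>X. \<forall>y\<in>X. Y x y \<longrightarrow> EU (F x) (F y)"
    unfolding contains_def by blast
  show "contains (e ` VU) (\<lambda>a b. \<exists>u\<in>VU. \<exists>w\<in>VU. EU u w \<and> a = e u \<and> b = e w) X Y"
    unfolding contains_def
  proof (intro exI[of _ "e \<circ> F"] conjI ballI impI)
    show "inj_on (e \<circ> F) X" using F(1) inj_on_subset[OF e F(2)] by (rule comp_inj_on)
    show "(e \<circ> F) ` X \<subseteq> e ` VU" using F(2) by auto
    fix x y assume "x \<in> X" "y \<in> X" "Y x y"
    then show "\<exists>u\<in>VU. \<exists>w\<in>VU. EU u w \<and> (e \<circ> F) x = e u \<and> (e \<circ> F) y = e w"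
      using F by (intro bexI[of _ "F x"] bexI[of _ "F y"]) auto
  qed
next
  assume "contains (e ` VU) (\<lambda>a b. \<exists>u\<in>VU. \<exists>w\<in>VU. EU u w \<and> a = e u \<and> b = e w) X Y"
  then obtain F where F: "inj_on F X" "F ` X \<subseteq> e ` VU"
    "\<forall>x\<in>X. \<forall>y\<in>X. Y x y \<longrightarrow> (\<exists>u\<in>VU. \<exists>w\<in>VU. EU u w \<and> F x = e u \<and> F y = e w)"
    unfolding contains_def by blast
  show "contains VU EU X Y" unfolding contains_def
  proof (intro exI[of _ "inv_into VU e \<circ> F"] conjI ballI impI)
    have ii: "inj_on (inv_into VU e) (e ` VU)" by (rule inj_on_inv_into) simp
    show "inj_on (inv_into VU e \<circ> F) X" using F(1) inj_on_subset[OF ii F(2)] by (rule comp_inj_on)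
    show "(inv_into VU e \<circ> F) ` X \<subseteq> VU"
    proof
      fix z assume "z \<in> (inv_into VU e \<circ> F) ` X"
      then obtain x where "x \<in> X" "z = inv_into VU e (F x)" by auto
      moreover have "F x \<in> e ` VU" using F(2) \<open>x \<in> X\<close> by blast
      ultimately show "z \<in> VU" by (simp add: inv_into_into)
    qed
    fix x y assume "x \<in> X" "y \<in> X" "Y x y"
    then obtain u w where "u \<in> VU" "w \<in> VU" "EU u w" "F x = e u" "F y = e w" using F(3) by blast
    then show "EU ((inv_into VU e \<circ> F) x) ((inv_into VU e \<circ> F) y)" using e by simp
  qed
qed

theorem mainTheorem14:
  fixes VU :: "'u set" and EU :: "'u \<Rightarrow> 'u \<Rightarrow> bool"
  assumes "cgraph VU EU"
    and "\<not> contains VU EU K_aleph0_V K_aleph0_E"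
  shows "\<exists>VH EH. cgraph VH EH \<and> in_D VU EU VH EH \<and>
           (\<forall>V E. cgraph V E \<and> in_D VU EU V E \<longrightarrow> contains VH EH V E)"
proof -
  define e where "e = to_nat_on VU"
  have e: "inj_on e VU" unfolding e_def using assms(1) unfolding cgraph_def by (intro inj_on_to_nat_on) blast
  define VU' where "VU' = e ` VU"
  define EU' where "EU' = (\<lambda>a b. \<exists>u\<in>VU. \<exists>w\<in>VU. EU u w \<and> a = e u \<and> b = e w)"
  have tr: "contains VU EU X Y \<longleftrightarrow> contains VU' EU' X Y" for X :: "nat set" and Y
    unfolding VU'_def EU'_def by (rule contains_transfer[OF e])
  have trD: "in_D VU EU V E \<longleftrightarrow> in_D VU' EU' V E" for V E
    unfolding in_D_def using tr by simp
  have sgU: "simple_graph VU EU" using assms(1) unfolding cgraph_def by blast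
  have sg': "simple_graph VU' EU'" unfolding simple_graph_def
  proof (intro allI impI)
    fix a b assume "EU' a b"
    then obtain u w where uw: "u \<in> VU" "w \<in> VU" "EU u w" "a = e u" "b = e w" unfolding EU'_def by blast
    then have "u \<noteq> w" "EU w u" using sgU unfolding simple_graph_def by blast+
    then have "e u \<noteq> e w" using e uw by (metis inj_onD)
    moreover have "EU' b a" unfolding EU'_def using uw \<open>EU w u\<close> by blast
    ultimately show "a \<in> VU' \<and> b \<in> VU' \<and> a \<noteq> b \<and> EU' b a" using uw unfolding VU'_def by blast
  qed
  have noK': "\<not> contains VU' EU' K_aleph0_V K_aleph0_E" using assms(2) tr by blast
  obtain VH EH where H: "cgraph VH EH" "in_D VU' EU' VH EH"
    "\<forall>V E. cgraph V E \<and> in_D VU' EU' V E \<longrightarrow> contains VH EH V E"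
    using main_nat[OF sg' noK'] by blast
  show ?thesis
    using H trD by (intro exI[of _ VH] exI[of _ EH]) auto
qed

end
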